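(* Let $n\ge0$ be an integer and define $\tilde\Phi_n:(-1,1)\to\mathbb R$ by $$\tilde\Phi_n(t)=\sum_{k=0}^\infty\alpha_k^{(n)}Q_k(t).$$ Let $t_1<\dots<t_n$ be the roots of $\psi_n$ in $(-1,1)$. Then for every $j=1,\dots,n$, $$\tilde\Phi_n(t_j)=\frac12\int_{-1}^1\frac{\psi_n(t)\,dt}{t_j-t}.$$
   Context: For a real number $c>0$, let $\psi_0,\psi_1,\dots$ be the prolate spheroidal wave functions of band limit $c$: the real $L^2[-1,1]$-normalized eigenfunctions of $F_c[\varphi](x)=\int_{-1}^1\varphi(t)e^{icxt}\,dt$ (eigenvalues ordered by decreasing absolute value); $\psi_n$ has exactly $n$ simple roots in $(-1,1)$. Let $P_k$ be the Legendre polynomials, and $\alpha_k^{(n)}=(k+\tfrac12)\int_{-1}^1\psi_n(x)P_k(x)\,dx$, so that $\psi_n=\sum_k\alpha_k^{(n)}P_k$ on $[-1,1]$. The Legendre functions of the second kind are $Q_0(t)=\frac12\log\frac{1+t}{1-t}$, $Q_1(t)=\frac t2\log\frac{1+t}{1-t}-1$, and $(k+1)Q_{k+1}(t)=(2k+1)tQ_k(t)-kQ_{k-1}(t)$ for $k\ge1$. *)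

theory Defs
  imports "HOL-Analysis.Analysis"
begin

fun legendreP :: "nat \<Rightarrow> real \<Rightarrow> real" where
  "legendreP 0 x = 1"
| "legendreP (Suc 0) x = x"
| "legendreP (Suc (Suc k)) x =
     ((2 * real k + 3) * x * legendreP (Suc k) x - (real k + 1) * legendreP k x) / (real k + 2)"

fun legendreQ :: "nat \<Rightarrow> real \<Rightarrow> real" where
  "legendreQ 0 t = ln ((1 + t) / (1 - t)) / 2"
| "legendreQ (Suc 0) t = t / 2 * ln ((1 + t) / (1 - t)) - 1"
| "legendreQ (Suc (Suc k)) t =
     ((2 * real k + 3) * t * legendreQ (Suc k) t - (real k + 1) * legendreQ k t) / (real k + 2)"

definition Fc :: "real \<Rightarrow> (real \<Rightarrow> complex) \<Rightarrow> real \<Rightarrow> complex" where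
  "Fc c \<phi> x = integral {-1..1} (\<lambda>t. \<phi> t * exp (\<i> * complex_of_real (c * x * t)))"

text \<open>Eigenvalues of F_c (eigenfunctions are entire, so continuity on [-1,1] loses nothing).\<close>
definition Fc_eigenvalue :: "real \<Rightarrow> complex \<Rightarrow> bool" where
  "Fc_eigenvalue c \<mu> \<longleftrightarrow>
     (\<exists>\<phi> :: real \<Rightarrow> complex. continuous_on {-1..1} \<phi> \<and> (\<exists>x\<in>{-1..1}. \<phi> x \<noteq> 0) \<and>
        (\<forall>x\<in>{-1..1}. Fc c \<phi> x = \<mu> * \<phi> x))"

text \<open>psi is (a choice of sign of) the n-th prolate spheroidal wave function of band limit c:
  a real, L^2[-1,1]-normalized eigenfunction of F_c whose eigenvalue is preceded by exactly
  n eigenvalues of strictly larger absolute value (ordering by decreasing absolute value).\<close>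
definition is_pswf :: "real \<Rightarrow> nat \<Rightarrow> (real \<Rightarrow> real) \<Rightarrow> bool" where
  "is_pswf c n \<psi> \<longleftrightarrow>
     continuous_on {-1..1} \<psi> \<and>
     integral {-1..1} (\<lambda>x. (\<psi> x)\<^sup>2) = 1 \<and>
     (\<exists>lam. (\<forall>x\<in>{-1..1}. Fc c (\<lambda>t. complex_of_real (\<psi> t)) x = lam * complex_of_real (\<psi> x)) \<and>
          finite {\<mu>. Fc_eigenvalue c \<mu> \<and> cmod \<mu> > cmod lam} \<and>
          card {\<mu>. Fc_eigenvalue c \<mu> \<and> cmod \<mu> > cmod lam} = n)"

definition legendre_coeff :: "(real \<Rightarrow> real) \<Rightarrow> nat \<Rightarrow> real" where
  "legendre_coeff \<psi> k = (real k + 1/2) * integral {-1..1} (\<lambda>x. \<psi> x * legendreP k x)"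

end

theory Submission
  imports Defs
begin


lemma power_has_integral:
  "((\<lambda>x::real. x ^ j) has_integral ((1 + (-1::real)^j) / real (Suc j))) {-1..1}"
proof -
  have "((\<lambda>x::real. x ^ j) has_integral ((1::real)^Suc j / real (Suc j) - (-1::real)^Suc j / real (Suc j))) {-1..1}"
  proof (rule fundamental_theorem_of_calculus)
    fix x :: real
    have "((\<lambda>x. x ^ Suc j / real (Suc j)) has_real_derivative x ^ j) (at x)"
      by (auto intro!: derivative_eq_intros simp del: of_nat_Suc power_Suc)
    then show "((\<lambda>x. x ^ Suc j / real (Suc j)) has_vector_derivative x ^ j) (at x within {-1..1})"
      using has_real_derivative_iff_has_vector_derivative has_vector_derivative_at_within by blast
  qed simp
  then show ?thesis by (simp add: add_divide_distrib)
qed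

lemma legendreP_cont: "continuous_on S (legendreP k)"
proof -
  have "continuous_on S (\<lambda>x. legendreP k x) \<and> continuous_on S (\<lambda>x. legendreP (Suc k) x)" for k
    by (induction k) (auto intro!: continuous_intros)
  then show ?thesis by (metis (no_types) eta_contract_eq)
qed

lemma rec3_bound:
  fixes f :: "nat \<Rightarrow> real"
  assumes rec: "\<And>k. f (Suc (Suc k)) = ((2 * real k + 3) * x * f (Suc k) - (real k + 1) * f k) / (real k + 2)"
    and x: "\<bar>x\<bar> \<le> 1" and C0: "\<bar>f 0\<bar> \<le> C" and C1: "\<bar>f 1\<bar> \<le> C"
  shows "\<bar>f k\<bar> \<le> C * 3 ^ k"
proof -
  have "\<bar>f k\<bar> \<le> C * 3 ^ k \<and> \<bar>f (Suc k)\<bar> \<le> C * 3 ^ Suc k" for k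
  proof (induction k)
    case 0 then show ?case using C0 C1 by auto
  next
    case (Suc k)
    have C: "C \<ge> 0" using C0 by auto
    have "\<bar>f (Suc (Suc k))\<bar> \<le> ((2 * real k + 3) * \<bar>f (Suc k)\<bar> + (real k + 1) * \<bar>f k\<bar>) / (real k + 2)"
      unfolding rec
    proof -
      have "\<bar>(2 * real k + 3) * x * f (Suc k) - (real k + 1) * f k\<bar> \<le> (2 * real k + 3) * \<bar>f (Suc k)\<bar> + (real k + 1) * \<bar>f k\<bar>"
      proof -
        have "\<bar>(2 * real k + 3) * x * f (Suc k)\<bar> \<le> (2 * real k + 3) * \<bar>f (Suc k)\<bar>"
          using x by (simp add: abs_mult mult_left_le_one_le mult_right_le_one_le)
        moreover have "\<bar>(2 * real k + 3) * x * f (Suc k) - (real k + 1) * f k\<bar> \<le> \<bar>(2 * real k + 3) * x * f (Suc k)\<bar> + \<bar>(real k + 1) * f k\<bar>"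
          by (rule abs_triangle_ineq4)
        moreover have "(2 * real k + 3) * (\<bar>x\<bar> * \<bar>f (Suc k)\<bar>) \<le> (2 * real k + 3) * \<bar>f (Suc k)\<bar>"
          using x by (intro mult_left_mono) (auto simp: mult_left_le_one_le)
        moreover have "\<bar>(2 * real k + 3) * x * f (Suc k)\<bar> = (2 * real k + 3) * (\<bar>x\<bar> * \<bar>f (Suc k)\<bar>)"
          by (simp add: abs_mult)
        moreover have "\<bar>(real k + 1) * f k\<bar> = (real k + 1) * \<bar>f k\<bar>"
          by (simp add: abs_mult)
        ultimately show ?thesis by linarith
      qed
      then show "\<bar>((2 * real k + 3) * x * f (Suc k) - (real k + 1) * f k) / (real k + 2)\<bar>
        \<le> ((2 * real k + 3) * \<bar>f (Suc k)\<bar> + (real k + 1) * \<bar>f k\<bar>) / (real k + 2)"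
        by (simp add: divide_right_mono)
    qed
    also have "\<dots> \<le> ((2 * real k + 3) * (C * 3 ^ Suc k) + (real k + 1) * (C * 3^k)) / (real k + 2)"
      using Suc by (intro divide_right_mono add_mono mult_left_mono) auto
    also have "\<dots> \<le> C * 3 ^ Suc (Suc k)"
    proof -
      have "((2 * real k + 3) * (C * 3 ^ Suc k) + (real k + 1) * (C * 3^k)) = C * 3^k * (7 * real k + 10)"
        by (simp add: algebra_simps)
      moreover have "C * 3^k * (7 * real k + 10) \<le> C * 3 ^ Suc (Suc k) * (real k + 2)"
        using C by (simp add: algebra_simps mult_left_mono)
      ultimately show ?thesis by (simp add: pos_divide_le_eq)
    qed
    finally show ?case using Suc by simp
  qed
  then show ?thesis by blast
qed

lemma legendreP_bound: "\<bar>x\<bar> \<le> 1 \<Longrightarrow> \<bar>legendreP k x\<bar> \<le> 3 ^ k"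
  using rec3_bound[of "\<lambda>k. legendreP k x" x 1 k] by auto

lemma legendreQ_bound: "\<bar>t\<bar> \<le> 1 \<Longrightarrow> \<bar>legendreQ k t\<bar> \<le> (\<bar>legendreQ 0 t\<bar> + \<bar>legendreQ 1 t\<bar>) * 3 ^ k"
  by (rule rec3_bound[of "\<lambda>k. legendreQ k t" t]) auto

lemma CD:
  "real (Suc N) * (legendreP (Suc N) s * legendreQ N t - legendreP N s * legendreQ (Suc N) t)
    = 1 + (s - t) * (\<Sum>k\<le>N. (2 * real k + 1) * legendreP k s * legendreQ k t)"
proof (induction N)
  case 0 then show ?case by (simp add: field_simps)
next
  case (Suc N)
  have hp: "(real N + 2) * legendreP (Suc (Suc N)) s = (2 * real N + 3) * s * legendreP (Suc N) s - (real N + 1) * legendreP N s"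
    by simp
  have hq: "(real N + 2) * legendreQ (Suc (Suc N)) t = (2 * real N + 3) * t * legendreQ (Suc N) t - (real N + 1) * legendreQ N t"
    by simp
  have "real (Suc (Suc N)) * (legendreP (Suc (Suc N)) s * legendreQ (Suc N) t - legendreP (Suc N) s * legendreQ (Suc (Suc N)) t)
     = ((real N + 2) * legendreP (Suc (Suc N)) s) * legendreQ (Suc N) t - legendreP (Suc N) s * ((real N + 2) * legendreQ (Suc (Suc N)) t)"
    by (simp add: algebra_simps)
  also have "\<dots> = (2 * real N + 3) * (s - t) * legendreP (Suc N) s * legendreQ (Suc N) t
       + real (Suc N) * (legendreP (Suc N) s * legendreQ N t - legendreP N s * legendreQ (Suc N) t)"
    unfolding hp hq by (simp add: algebra_simps)
  finally have "real (Suc (Suc N)) * (legendreP (Suc (Suc N)) s * legendreQ (Suc N) t - legendreP (Suc N) s * legendreQ (Suc (Suc N)) t)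
     = (2 * real N + 3) * (s - t) * legendreP (Suc N) s * legendreQ (Suc N) t
       + real (Suc N) * (legendreP (Suc N) s * legendreQ N t - legendreP N s * legendreQ (Suc N) t)" .
  then show ?case using Suc by (simp add: algebra_simps)
qed


definition gm :: "nat \<Rightarrow> nat \<Rightarrow> real" where
  "gm k r = 2 ^ (k + 1) * fact (k + 2 * r) * fact (k + r) / (fact r * fact (2 * k + 2 * r + 1))"

lemma alg0: "(a::real) \<noteq> 0 \<Longrightarrow> x \<noteq> 0 \<Longrightarrow> D \<noteq> 0 \<Longrightarrow>
   a * (4 * p * (x*F) * (x*F) / (a*(2*x)*D)) = x * (2 * p * F * F / D)"
  by (simp add: field_simps)

lemma gm_rec0: "(2 * real k + 3) * gm (k + 1) 0 = (real k + 1) * gm k 0"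
proof -
  define F :: real where "F = fact k"
  define D :: real where "D = fact (2*k+1)"
  have pos: "F > 0" "D > 0" unfolding F_def D_def by auto
  have g1: "gm (k+1) 0 = 4 * 2^k * ((real k+1)*F) * ((real k+1)*F) / ((2*real k+3)*(2*(real k+1))*D)"
    unfolding gm_def F_def D_def by (simp add: algebra_simps numeral_eq_Suc)
  have g2: "gm k 0 = 2 * 2^k * F * F / D"
    unfolding gm_def F_def D_def by (simp add: algebra_simps numeral_eq_Suc)
  have nz: "2*real k+3 \<noteq> 0" "real k+1 \<noteq> 0" by linarith+
  show ?thesis unfolding g1 g2 using alg0[OF nz, of D "2^k" F] pos by simp
qed

lemma alg1:
  fixes uu vv ee w v1 R D A B p :: real
  assumes "(v1::real) \<noteq> 0" "ee \<noteq> 0" "w \<noteq> 0" "R \<noteq> 0" "D \<noteq> 0"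
    and "v1 = vv + 1" "ee = 2*uu+2* vv+5" "w = uu+vv+2"
  shows "(uu + 2) * (8 * p * A * (w * B) / (R * (ee * (2*w) * D))) =
   (2 * uu + 3) * (4 * p * ((uu + 2 * vv + 3) * A) * (w * B) / ((v1 * R) * (ee * (2*w) * D))) - (uu + 1) * (2 * p * A * B / ((v1 * R) * D))"
proof -
  have h1: "(uu + 2) * (8 * p * A * (w * B) / (R * (ee * (2*w) * D))) = 4*(uu+2)* v1 * (p*A*B/(v1*R*ee*D))"
    using assms(1-5) by (simp add: field_simps)
  have h2: "(2 * uu + 3) * (4 * p * ((uu + 2 * vv + 3) * A) * (w * B) / ((v1 * R) * (ee * (2*w) * D))) = 2*(2*uu+3)*(uu+2* vv+3) * (p*A*B/(v1*R*ee*D))"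
    using assms(1-5) by (simp add: field_simps)
  have h3: "(uu + 1) * (2 * p * A * B / ((v1 * R) * D)) = 2*(uu+1)*ee * (p*A*B/(v1*R*ee*D))"
    using assms(1-5) by (simp add: field_simps)
  have h4: "4*(uu+2)* v1 = 2*(2*uu+3)*(uu+2* vv+3) - 2*(uu+1)*ee"
    using assms(6-8) by (simp add: algebra_simps)
  show ?thesis unfolding h1 h2 h3 h4 by (rule left_diff_distrib)
qed

lemma gm_rec: "(real k + 2) * gm (k + 2) r =
   (2 * real k + 3) * gm (k + 1) (Suc r) - (real k + 1) * gm k (Suc r)"
proof -
  define A :: real where "A = fact (k + 2 + 2 * r)"
  define B :: real where "B = fact (k + 1 + r)"
  define R :: real where "R = fact r"
  define D :: real where "D = fact (2 * k + 2 * r + 3)"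
  define w where "w = real k + real r + 2"
  define e where "e = 2*real k + 2*real r + 5"
  define v1 where "v1 = real r + 1"
  have pos: "A \<noteq> 0" "B \<noteq> 0" "R \<noteq> 0" "D \<noteq> 0" "w \<noteq> 0" "e \<noteq> 0" "v1 \<noteq> 0"
    unfolding A_def B_def R_def D_def w_def e_def v1_def by auto
  have g1: "gm (k + 2) r = 8 * 2^k * A * (w * B) / (R * (e * (2*w) * D))"
    unfolding gm_def A_def B_def R_def D_def w_def e_def by (simp add: algebra_simps numeral_eq_Suc)
  have g2: "gm (k + 1) (Suc r) = 4 * 2^k * ((real k + 2 * real r + 3) * A) * (w * B) / ((v1 * R) * (e * (2*w) * D))"
    unfolding gm_def A_def B_def R_def D_def w_def e_def v1_def by (simp add: algebra_simps numeral_eq_Suc)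
  have g3: "gm k (Suc r) = 2 * 2^k * A * B / ((v1 * R) * D)"
    unfolding gm_def A_def B_def R_def D_def v1_def by (simp add: algebra_simps numeral_eq_Suc)
  show ?thesis unfolding g1 g2 g3
    by (rule alg1) (use pos in \<open>auto simp: w_def e_def v1_def\<close>)
qed
definition Fm :: "nat \<Rightarrow> nat \<Rightarrow> real" where
  "Fm j k = (if k \<le> j \<and> even (j - k) then gm k ((j - k) div 2) else 0)"

lemma Fm_rec: "(real k + 2) * Fm j (k + 2) = (2 * real k + 3) * Fm (j + 1) (k + 1) - (real k + 1) * Fm j k"
proof (cases "k \<le> j \<and> even (j - k)")
  case False
  then have n1: "\<not> (k + 2 \<le> j \<and> even (j - (k+2)))" and n2: "\<not> (k + 1 \<le> j + 1 \<and> even (j + 1 - (k+1)))"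
    by presburger+
  have "Fm j (k+2) = 0" using n1 unfolding Fm_def by (rule if_not_P)
  moreover have "Fm (j+1) (k+1) = 0" using n2 unfolding Fm_def by (rule if_not_P)
  moreover have "Fm j k = 0" using False unfolding Fm_def by (rule if_not_P)
  ultimately show ?thesis by simp
next
  case True
  then obtain r where j: "j = k + 2 * r" by (metis dvd_def le_add_diff_inverse evenE)
  show ?thesis
  proof (cases r)
    case 0
    then show ?thesis unfolding Fm_def j using gm_rec0[of k] by simp
  next
    case (Suc r')
    have a: "Fm j (k + 2) = gm (k + 2) r'" unfolding Fm_def j Suc by simp
    have b: "Fm (j + 1) (k + 1) = gm (k + 1) (Suc r')" unfolding Fm_def j Suc by simp
    have c: "Fm j k = gm k (Suc r')" unfolding Fm_def j Suc by simp
    show ?thesis unfolding a b c by (rule gm_rec)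
  qed
qed

lemma alg2: "(a::real) \<noteq> 0 \<Longrightarrow> b \<noteq> 0 \<Longrightarrow> c \<noteq> 0 \<Longrightarrow> 2 * a * b / (b * (c * a)) = 2 / c"
  by (simp add: field_simps)
lemma alg3: "(a::real) \<noteq> 0 \<Longrightarrow> b \<noteq> 0 \<Longrightarrow> c \<noteq> 0 \<Longrightarrow> x \<noteq> 0 \<Longrightarrow> 4 * a * (x * b) / (b * (c * (2 * x) * a)) = 2 / c"
  by (simp add: field_simps)

definition mom :: "nat \<Rightarrow> nat \<Rightarrow> real" where
  "mom j k = integral {-1..1} (\<lambda>x. x ^ j * legendreP k x)"

lemma integrable_polyP: "(\<lambda>x. x ^ j * legendreP k x) integrable_on {-1..1::real}"
  by (intro integrable_continuous_real continuous_intros legendreP_cont)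

lemma mom_rec: "mom j (k + 2) = ((2 * real k + 3) * mom (j + 1) (k + 1) - (real k + 1) * mom j k) / (real k + 2)"
proof -
  have "mom j (k + 2) = integral {-1..1} (\<lambda>x. ((2 * real k + 3) * (x ^ (j+1) * legendreP (k+1) x) - (real k + 1) * (x ^ j * legendreP k x)) / (real k + 2))"
    unfolding mom_def by (rule integral_cong) (simp add: algebra_simps numeral_eq_Suc diff_divide_distrib)
  also have "\<dots> = ((2 * real k + 3) * mom (j + 1) (k + 1) - (real k + 1) * mom j k) / (real k + 2)"
    unfolding mom_def
    by (simp add: integral_diff integrable_polyP integrable_on_cmult_left integral_mult_right del: power_Suc)
  finally show ?thesis .
qed

lemma mom_Fm: "mom j k = Fm j k"
proof -
  have "\<forall>j. mom j k = Fm j k \<and> mom j (Suc k) = Fm j (Suc k)"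
  proof (induction k)
    case 0
    have "mom j 0 = Fm j 0" for j
    proof -
      have "mom j 0 = (1 + (-1)^j) / real (Suc j)"
        unfolding mom_def using power_has_integral[of j] by (simp add: integral_unique)
      moreover have "Fm j 0 = (1 + (-1)^j) / real (Suc j)"
      proof (cases "even j")
        case True
        then obtain r where j: "j = 2 * r" by auto
        have "gm 0 r = 2 * fact (2*r) * fact r / (fact r * ((2*real r+1) * fact (2*r)))"
          unfolding gm_def by simp
        also have "\<dots> = 2 / (2 * real r + 1)"
          by (rule alg2) auto
        finally show ?thesis unfolding Fm_def j by (simp add: add.commute)
      next
        case False then show ?thesis unfolding Fm_def by simp
      qed
      ultimately show ?thesis by simp
    qed
    moreover have "mom j 1 = Fm j 1" for j
    proof -
      have "mom j 1 = (1 + (-1)^Suc j) / real (Suc (Suc j))"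
      proof -
        have "(\<lambda>x. x ^ j * legendreP 1 x) = (\<lambda>x::real. x ^ Suc j)" by (auto simp: power_Suc2)
        then show ?thesis unfolding mom_def using power_has_integral[of "Suc j"] integral_unique by metis
      qed
      moreover have "Fm j 1 = (1 + (-1)^Suc j) / real (Suc (Suc j))"
      proof (cases "odd j")
        case True
        then obtain r where j: "j = 2 * r + 1" using oddE by blast
        have "gm 1 r = 4 * fact (2*r+1) * ((real r + 1) * fact r) / (fact r * ((2 * real r + 3) * (2 * (real r + 1)) * fact (2*r+1)))"
          unfolding gm_def by (simp add: numeral_eq_Suc algebra_simps)
        also have "\<dots> = 2 / (2 * real r + 3)"
          by (rule alg3) auto
        finally show ?thesis unfolding Fm_def j by (simp add: algebra_simps)
      next
        case False then show ?thesis unfolding Fm_def by auto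
      qed
      ultimately show ?thesis by simp
    qed
    ultimately show ?case by simp
  next
    case (Suc k)
    have "mom j (Suc (Suc k)) = Fm j (Suc (Suc k))" for j
    proof -
      have "mom j (Suc (Suc k)) = ((2 * real k + 3) * Fm (j + 1) (k + 1) - (real k + 1) * Fm j k) / (real k + 2)"
        using mom_rec[of j k] Suc by simp
      also have "\<dots> = Fm j (k + 2)" using Fm_rec[of k j] by (simp add: field_simps)
      finally show ?thesis by simp
    qed
    then show ?case using Suc by simp
  qed
  then show ?thesis by blast
qed

lemma mom_zero: "j < k \<Longrightarrow> mom j k = 0"
  by (simp add: mom_Fm Fm_def)



lemma core:
  fixes a :: "nat \<Rightarrow> real" and \<psi> :: "real \<Rightarrow> real" and K c t :: real
  assumes c: "c > 0" and K: "K \<ge> 0"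
   and ab: "\<And>m. \<bar>a m\<bar> \<le> K * c^m / fact m"
   and ser: "\<And>x. x \<in> {-1..1} \<Longrightarrow> (\<lambda>m. a m * x^m) sums \<psi> x"
   and t: "t \<in> {-1<..<1}" and pt: "\<psi> t = 0"
  shows "(\<lambda>k. legendre_coeff \<psi> k * legendreQ k t) sums (integral {-1..1} (\<lambda>s. \<psi> s / (t - s)) / 2)"
proof -
  have tabs: "\<bar>t\<bar> \<le> 1" using t by auto
  define S where "S m s = (\<Sum>i<m. t^(m - Suc i) * s^i)" for m s
  have S_bound: "\<bar>S m s\<bar> \<le> real m" if "s \<in> {-1..1}" for m s
  proof -
    have "\<bar>S m s\<bar> \<le> (\<Sum>i<m. \<bar>t^(m - Suc i) * s^i\<bar>)" unfolding S_def by (rule sum_abs)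
    also have "\<dots> \<le> (\<Sum>i<m. 1)"
    proof (rule sum_mono)
      fix i assume "i \<in> {..<m}"
      have "\<bar>s\<bar> \<le> 1" using that by auto
      then show "\<bar>t^(m - Suc i) * s^i\<bar> \<le> 1"
        using tabs by (simp add: abs_mult power_abs) (metis mult_le_one power_le_one abs_ge_zero zero_le_power)
    qed
    finally show ?thesis by simp
  qed
  have S_cont: "continuous_on A (S m)" for m A unfolding S_def[abs_def] by (intro continuous_intros)
  have S_orth: "integral {-1..1} (\<lambda>s. S m s * legendreP N s) = 0" if "m \<le> N" for m N
  proof -
    have "integral {-1..1} (\<lambda>s. S m s * legendreP N s) = integral {-1..1} (\<lambda>s. \<Sum>i<m. t^(m - Suc i) * (s^i * legendreP N s))"
      unfolding S_def by (simp add: sum_distrib_right mult.assoc)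
    also have "\<dots> = (\<Sum>i<m. t^(m - Suc i) * mom i N)"
      unfolding mom_def by (subst integral_sum) (auto intro!: integrable_polyP integrable_on_mult_right)
    also have "\<dots> = 0" using that by (auto intro!: sum.neutral mom_zero)
    finally show ?thesis .
  qed
  define E where "E m = K * real m ^ 2 * (9*c)^m / fact m" for m
  have E_nonneg: "E m \<ge> 0" for m unfolding E_def using K c by auto
  have E_summ: "summable E"
  proof (rule summable_comparison_test[where g = "\<lambda>m. K * (inverse (fact m) * (36*c)^m)"])
    show "summable (\<lambda>m. K * (inverse (fact m) * (36*c)^m))" by (intro summable_mult summable_exp)
    have "norm (E m) \<le> K * (inverse (fact m) * (36*c)^m)" for m
    proof -
      have m2: "real m ^ 2 \<le> 4 ^ m"
      proof -
        have "m ^ 2 \<le> 4 ^ m"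
        proof -
          have "m \<le> 2^m" using less_exp[of m] by linarith
          then have "m ^ 2 \<le> (2^m)^2" by (rule power_mono) simp
          also have "((2::nat)^m) ^ 2 = (2^2) ^ m" by (metis power_mult mult.commute)
          also have "\<dots> = 4 ^ m" by simp
          finally show ?thesis .
        qed
        then have "real (m^2) \<le> real (4^m)" by (simp only: of_nat_le_iff)
        then show ?thesis by simp
      qed
      have "E m = K * (inverse (fact m) * (real m ^ 2 * (9*c)^m))" unfolding E_def by (simp add: field_simps)
      also have "\<dots> \<le> K * (inverse (fact m) * (4^m * (9*c)^m))"
        using K c m2 by (intro mult_left_mono mult_right_mono) auto
      also have "\<dots> = K * (inverse (fact m) * (36*c)^m)"
      proof -
        have "(36*c)^m = (4*(9*c))^m" by simp
        also have "\<dots> = 4^m*(9*c)^m" by (rule power_mult_distrib)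
        finally have h: "(36*c)^m = 4^m*(9*c)^m" .
        show ?thesis by (subst h) (rule refl)
      qed
      finally show ?thesis using E_nonneg by simp
    qed
    then show "\<exists>N. \<forall>n\<ge>N. norm (E n) \<le> K * (inverse (fact n) * (36*c)^n)" by blast
  qed
  have aE: "\<bar>a m\<bar> * real m \<le> E m" for m
  proof -
    have "\<bar>a m\<bar> * real m \<le> K * c^m / fact m * real m"
      by (rule mult_right_mono[OF ab]) simp
    also have "\<dots> \<le> E m"
    proof -
      have "real m \<le> real m ^ 2 * 9^m"
      proof (cases m)
        case 0 then show ?thesis by simp
      next
        case (Suc p)
        have "real m \<le> real m ^ 2" using Suc by (simp add: power2_eq_square)
        also have "\<dots> \<le> real m ^ 2 * 9^m" by (rule mult_le_cancel_left1[THEN iffD2]) (auto simp: one_le_power)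
        finally show ?thesis .
      qed
      then have "K * c^m / fact m * real m \<le> K * c^m / fact m * (real m ^ 2 * 9^m)"
        using K c by (intro mult_left_mono) auto
      then show ?thesis unfolding E_def by (simp add: power_mult_distrib field_simps)
    qed
    finally show ?thesis .
  qed
  have am_summ: "summable (\<lambda>m. \<bar>a m\<bar> * real m)"
    by (rule summable_comparison_test[OF _ E_summ]) (use aE in auto)
  have aS: "norm (a m * S m s) \<le> \<bar>a m\<bar> * real m" if "s \<in> {-1..1}" for m s
    using S_bound[OF that, of m] by (simp add: abs_mult mult_left_mono)
  have aS_summ: "summable (\<lambda>m. a m * S m s)" if "s \<in> {-1..1}" for s
    by (rule summable_comparison_test[OF _ am_summ]) (use aS[OF that] in auto)
  define G where "G s = - (\<Sum>m. a m * S m s)" for s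
  have unif: "uniform_limit {-1..1} (\<lambda>n s. \<Sum>m<n. a m * S m s) (\<lambda>s. \<Sum>m. a m * S m s) sequentially"
    by (rule Weierstrass_m_test[OF aS am_summ])
  have G_cont: "continuous_on {-1..1} G"
  proof -
    have "continuous_on {-1..1} (\<lambda>s. \<Sum>m. a m * S m s)"
      by (rule uniform_limit_theorem[OF _ unif]) (auto intro!: always_eventually continuous_intros S_cont)
    then show ?thesis unfolding G_def[abs_def] by (intro continuous_intros)
  qed
  have psiG: "\<psi> s = (t - s) * G s" if s: "s \<in> {-1..1}" for s
  proof -
    have tt: "t \<in> {-1..1}" using t by auto
    have "(\<lambda>m. a m * s^m - a m * t^m) sums (\<psi> s - \<psi> t)"
      by (rule sums_diff[OF ser[OF s] ser[OF tt]])
    moreover have "(\<lambda>m. a m * s^m - a m * t^m) = (\<lambda>m. (s - t) * (a m * S m s))"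
    proof
      fix m
      have "s^m - t^m = (s - t) * S m s" unfolding S_def by (rule power_diff_sumr2)
      then show "a m * s^m - a m * t^m = (s - t) * (a m * S m s)"
        by (metis right_diff_distrib mult.left_commute)
    qed
    ultimately have "(\<lambda>m. (s - t) * (a m * S m s)) sums \<psi> s" using pt by simp
    moreover have "(\<lambda>m. (s - t) * (a m * S m s)) sums ((s - t) * (\<Sum>m. a m * S m s))"
      by (rule sums_mult[OF summable_sums[OF aS_summ[OF s]]])
    ultimately have "\<psi> s = (s - t) * (\<Sum>m. a m * S m s)" using sums_unique2 by blast
    then show ?thesis unfolding G_def by (simp add: algebra_simps)
  qed
  have psi_cont: "continuous_on {-1..1} \<psi>"
  proof -
    have "continuous_on {-1..1} (\<lambda>s. (t - s) * G s)" by (intro continuous_intros G_cont)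
    then show ?thesis using psiG continuous_on_eq by (metis (no_types, lifting))
  qed
  have int_eq: "integral {-1..1} (\<lambda>s. \<psi> s / (t - s)) = integral {-1..1} G"
  proof (rule integral_spike[of "{t}"])
    show "negligible {t}" by simp
    fix s assume "s \<in> {-1..1} - {t}"
    then show "G s = \<psi> s / (t - s)" using psiG[of s] by auto
  qed
  define \<tau> where "\<tau> N = (\<Sum>i. \<bar>a (i+N)\<bar> * real (i+N))" for N
  have tau_summ: "summable (\<lambda>i. \<bar>a (i+N)\<bar> * real (i+N))" for N
    using am_summ summable_iff_shift[of "\<lambda>m. \<bar>a m\<bar> * real m" N] by simp
  have tail: "\<bar>G s + (\<Sum>m<N. a m * S m s)\<bar> \<le> \<tau> N" if s: "s \<in> {-1..1}" for N s
  proof -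
    have "(\<Sum>m. a m * S m s) = (\<Sum>i. a (i+N) * S (i+N) s) + (\<Sum>m<N. a m * S m s)"
      by (rule suminf_split_initial_segment[OF aS_summ[OF s]])
    then have "G s + (\<Sum>m<N. a m * S m s) = - (\<Sum>i. a (i+N) * S (i+N) s)"
      unfolding G_def by simp
    moreover have "norm (\<Sum>i. a (i+N) * S (i+N) s) \<le> \<tau> N"
    proof -
      have sn: "summable (\<lambda>i. norm (a (i+N) * S (i+N) s))"
        by (rule summable_comparison_test[OF _ tau_summ[of N]]) (rule exI[of _ 0], intro allI impI, simp only: real_norm_def abs_abs, rule aS[OF s, unfolded real_norm_def])
      have "norm (\<Sum>i. a (i+N) * S (i+N) s) \<le> (\<Sum>i. norm (a (i+N) * S (i+N) s))"
        by (rule summable_norm[OF sn])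
      also have "\<dots> \<le> \<tau> N" unfolding \<tau>_def
        by (rule suminf_le[OF _ sn tau_summ]) (rule aS[OF s])
      finally show ?thesis .
    qed
    ultimately show ?thesis by simp
  qed
  have tau_nonneg: "\<tau> N \<ge> 0" for N unfolding \<tau>_def by (rule suminf_nonneg[OF tau_summ]) simp
  define GP where "GP N = integral {-1..1} (\<lambda>s. G s * legendreP N s)" for N
  have GP_bound: "\<bar>GP N\<bar> \<le> 2 * 3^N * \<tau> (Suc N)" for N
  proof -
    define H where "H s = (G s + (\<Sum>m<Suc N. a m * S m s)) * legendreP N s" for s
    have int1: "(\<lambda>s. G s * legendreP N s) integrable_on {-1..1}"
      by (intro integrable_continuous_real continuous_intros G_cont legendreP_cont)
    have int2: "(\<lambda>s. S m s * legendreP N s) integrable_on {-1..1}" for m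
      by (intro integrable_continuous_real continuous_intros S_cont legendreP_cont)
    have "integral {-1..1} H = GP N + (\<Sum>m<Suc N. a m * integral {-1..1} (\<lambda>s. S m s * legendreP N s))"
    proof -
      have "integral {-1..1} H = integral {-1..1} (\<lambda>s. G s * legendreP N s + (\<Sum>m<Suc N. a m * (S m s * legendreP N s)))"
        unfolding H_def by (simp add: distrib_right sum_distrib_right mult.assoc del: sum.lessThan_Suc)
      also have "\<dots> = GP N + integral {-1..1} (\<lambda>s. \<Sum>m<Suc N. a m * (S m s * legendreP N s))"
        unfolding GP_def
        by (rule integral_add[OF int1]) (intro integrable_sum integrable_on_mult_right int2 finite_lessThan)
      also have "integral {-1..1} (\<lambda>s. \<Sum>m<Suc N. a m * (S m s * legendreP N s)) = (\<Sum>m<Suc N. a m * integral {-1..1} (\<lambda>s. S m s * legendreP N s))"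
        by (subst integral_sum) (auto intro!: integrable_on_mult_right int2)
      finally show ?thesis .
    qed
    also have "(\<Sum>m<Suc N. a m * integral {-1..1} (\<lambda>s. S m s * legendreP N s)) = 0"
      by (rule sum.neutral) (auto simp: S_orth)
    finally have HG: "integral {-1..1} H = GP N" by simp
    have "norm (integral {-1..1} H) \<le> (\<tau> (Suc N) * 3^N) * (1 - (-1))"
    proof (rule integral_bound)
      show "continuous_on {-1..1} H" unfolding H_def
        by (intro continuous_intros G_cont S_cont legendreP_cont)
      fix s :: real assume s: "s \<in> {-1..1}"
      have "norm (H s) = \<bar>G s + (\<Sum>m<Suc N. a m * S m s)\<bar> * \<bar>legendreP N s\<bar>"
        unfolding H_def by (simp add: abs_mult)
      also have "\<dots> \<le> \<tau> (Suc N) * 3^N"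
        using s by (intro mult_mono tail legendreP_bound tau_nonneg) auto
      finally show "norm (H s) \<le> \<tau> (Suc N) * 3^N" .
    qed simp
    then show ?thesis using HG by (simp add: mult.commute mult.left_commute)
  qed
  define T where "T N = (\<Sum>i. E (i + Suc N))" for N
  have T0: "T \<longlonglongrightarrow> 0"
  proof (rule LIMSEQ_I)
    fix r :: real assume r: "r > 0"
    obtain N0 where N0: "\<And>n. n \<ge> N0 \<Longrightarrow> norm (\<Sum>i. E (i + n)) < r"
      using suminf_exist_split[OF r E_summ] by blast
    show "\<exists>no. \<forall>n\<ge>no. norm (T n - 0) < r"
    proof (rule exI[of _ N0], intro allI impI)
      fix n assume "n \<ge> N0"
      then have "norm (\<Sum>i. E (i + Suc n)) < r" using N0[of "Suc n"] by simp
      then show "norm (T n - 0) < r" unfolding T_def by simp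
    qed
  qed
  have aE2: "real (Suc N) * 9^N * (\<bar>a m\<bar> * real m) \<le> E m" if m: "Suc N \<le> m" for N m
  proof -
    have hX: "real (Suc N) * 9^N * real m \<le> real m * 9^m * real m"
    proof (intro mult_right_mono mult_mono)
      show "real (Suc N) \<le> real m" using m by simp
      show "(9::real)^N \<le> 9^m" using m by (intro power_increasing) auto
    qed auto
    have "\<bar>a m\<bar> * (real (Suc N) * 9^N * real m) \<le> (K * c^m / fact m) * (real m * 9^m * real m)"
      by (rule mult_mono[OF ab[of m] hX]) (use K c in auto)
    then show ?thesis unfolding E_def by (simp add: power_mult_distrib power2_eq_square field_simps)
  qed
  have tau_T: "real (Suc N) * 9^N * \<tau> (Suc N) \<le> T N" for N
  proof -
    have "real (Suc N) * 9^N * \<tau> (Suc N) = (\<Sum>i. real (Suc N) * 9^N * (\<bar>a (i + Suc N)\<bar> * real (i + Suc N)))"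
      unfolding \<tau>_def by (rule suminf_mult[OF tau_summ, symmetric])
    also have "\<dots> \<le> T N" unfolding T_def
    proof (rule suminf_le)
      show "summable (\<lambda>i. real (Suc N) * 9^N * (\<bar>a (i + Suc N)\<bar> * real (i + Suc N)))"
        by (intro summable_mult tau_summ)
      show "summable (\<lambda>i. E (i + Suc N))" using E_summ summable_iff_shift[of E "Suc N"] by simp
      fix i show "real (Suc N) * 9^N * (\<bar>a (i + Suc N)\<bar> * real (i + Suc N)) \<le> E (i + Suc N)"
        by (rule aE2) simp
    qed
    finally show ?thesis .
  qed
  have tau_mono: "\<tau> (Suc (Suc N)) \<le> \<tau> (Suc N)" for N
  proof -
    have "(\<Sum>i. \<bar>a (Suc i + Suc N)\<bar> * real (Suc i + Suc N)) = \<tau> (Suc N) - \<bar>a (0 + Suc N)\<bar> * real (0 + Suc N)"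
      unfolding \<tau>_def by (rule suminf_split_head[OF tau_summ[of "Suc N"]])
    moreover have "(\<lambda>i. \<bar>a (Suc i + Suc N)\<bar> * real (Suc i + Suc N)) = (\<lambda>i. \<bar>a (i + Suc (Suc N))\<bar> * real (i + Suc (Suc N)))"
      by simp
    ultimately have "\<tau> (Suc (Suc N)) = \<tau> (Suc N) - \<bar>a (Suc N)\<bar> * real (Suc N)"
      unfolding \<tau>_def by simp
    then show ?thesis by simp
  qed
  define Cq where "Cq = \<bar>legendreQ 0 t\<bar> + \<bar>legendreQ 1 t\<bar>"
  have Cq: "Cq \<ge> 0" unfolding Cq_def by simp
  have Qb: "\<bar>legendreQ k t\<bar> \<le> Cq * 3^k" for k unfolding Cq_def by (rule legendreQ_bound[OF tabs])
  define R where "R N = (real (Suc N) / 2) * (legendreQ N t * GP (Suc N) - legendreQ (Suc N) t * GP N)" for N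
  have Rb: "\<bar>R N\<bar> \<le> 6 * Cq * T N" for N
  proof -
    define X :: real where "X = 3^N"
    have X: "X \<ge> 0" unfolding X_def by simp
    have q0: "\<bar>legendreQ N t\<bar> \<le> Cq * X" using Qb[of N] unfolding X_def .
    have q1: "\<bar>legendreQ (Suc N) t\<bar> \<le> Cq * X * 3" using Qb[of "Suc N"] unfolding X_def by (simp add: mult.commute mult.left_commute)
    have g0: "\<bar>GP N\<bar> \<le> 2 * X * \<tau> (Suc N)" using GP_bound[of N] unfolding X_def .
    have g1: "\<bar>GP (Suc N)\<bar> \<le> 2 * X * 3 * \<tau> (Suc N)"
    proof -
      have "\<bar>GP (Suc N)\<bar> \<le> 2 * 3^(Suc N) * \<tau> (Suc (Suc N))" by (rule GP_bound)
      also have "\<dots> \<le> 2 * 3^(Suc N) * \<tau> (Suc N)" by (intro mult_left_mono tau_mono) auto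
      finally show ?thesis unfolding X_def by (simp add: mult.commute mult.left_commute)
    qed
    have "\<bar>legendreQ N t * GP (Suc N) - legendreQ (Suc N) t * GP N\<bar> \<le> \<bar>legendreQ N t\<bar> * \<bar>GP (Suc N)\<bar> + \<bar>legendreQ (Suc N) t\<bar> * \<bar>GP N\<bar>"
      by (metis abs_mult abs_triangle_ineq4)
    also have "\<dots> \<le> (Cq * X) * (2 * X * 3 * \<tau> (Suc N)) + (Cq * X * 3) * (2 * X * \<tau> (Suc N))"
      by (intro add_mono mult_mono q0 q1 g0 g1) (use Cq X tau_nonneg in auto)
    also have "\<dots> = 12 * Cq * (X * X) * \<tau> (Suc N)" by (simp add: algebra_simps)
    finally have h: "\<bar>legendreQ N t * GP (Suc N) - legendreQ (Suc N) t * GP N\<bar> \<le> 12 * Cq * (X * X) * \<tau> (Suc N)" .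
    have XX: "X * X = 9^N" unfolding X_def by (simp add: power_mult_distrib[symmetric])
    have "\<bar>R N\<bar> = (real (Suc N) / 2) * \<bar>legendreQ N t * GP (Suc N) - legendreQ (Suc N) t * GP N\<bar>"
      unfolding R_def by (simp add: abs_mult)
    also have "\<dots> \<le> (real (Suc N) / 2) * (12 * Cq * (X * X) * \<tau> (Suc N))"
      by (intro mult_left_mono h) simp
    also have "\<dots> = 6 * Cq * (real (Suc N) * 9^N * \<tau> (Suc N))" unfolding XX by (simp add: algebra_simps)
    also have "\<dots> \<le> 6 * Cq * T N" by (intro mult_left_mono tau_T) (use Cq in auto)
    finally show ?thesis .
  qed
  have intG: "G integrable_on {-1..1}" by (rule integrable_continuous_real[OF G_cont])
  have intGP: "(\<lambda>s. G s * legendreP k s) integrable_on {-1..1}" for k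
    by (intro integrable_continuous_real continuous_intros G_cont legendreP_cont)
  have intPsiP: "(\<lambda>s. \<psi> s * legendreP k s) integrable_on {-1..1}" for k
    by (intro integrable_continuous_real continuous_intros psi_cont legendreP_cont)
  have partial: "(\<Sum>k<Suc N. legendre_coeff \<psi> k * legendreQ k t) = integral {-1..1} G / 2 - R N" for N
  proof -
    have "(\<Sum>k<Suc N. legendre_coeff \<psi> k * legendreQ k t)
        = (\<Sum>k<Suc N. integral {-1..1} (\<lambda>s. ((real k + 1/2) * legendreQ k t) * (\<psi> s * legendreP k s)))"
      unfolding legendre_coeff_def by (intro sum.cong refl) (simp add: intPsiP integral_mult_right)
    also have "\<dots> = integral {-1..1} (\<lambda>s. \<Sum>k<Suc N. ((real k + 1/2) * legendreQ k t) * (\<psi> s * legendreP k s))"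
      by (rule integral_sum[symmetric]) (auto intro!: integrable_on_mult_right intPsiP)
    also have "\<dots> = integral {-1..1} (\<lambda>s. G s / 2 - (real (Suc N) / 2) * (legendreQ N t * (G s * legendreP (Suc N) s) - legendreQ (Suc N) t * (G s * legendreP N s)))"
    proof (rule integral_cong)
      fix s :: real assume s: "s \<in> {-1..1}"
      define W where "W = (\<Sum>k\<le>N. (2 * real k + 1) * legendreP k s * legendreQ k t)"
      have cd: "real (Suc N) * (legendreP (Suc N) s * legendreQ N t - legendreP N s * legendreQ (Suc N) t) = 1 + (s - t) * W"
        unfolding W_def by (rule CD)
      have "(\<Sum>k<Suc N. ((real k + 1/2) * legendreQ k t) * (\<psi> s * legendreP k s)) = \<psi> s * W / 2"
        unfolding W_def lessThan_Suc_atMost by (simp add: sum_divide_distrib sum_distrib_left field_simps)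
      also have "\<dots> = G s * ((t - s) * W) / 2" unfolding psiG[OF s] by (simp add: algebra_simps)
      also have "(t - s) * W = 1 - real (Suc N) * (legendreP (Suc N) s * legendreQ N t - legendreP N s * legendreQ (Suc N) t)"
        using cd by (simp add: algebra_simps)
      finally have eq: "(\<Sum>k<Suc N. ((real k + 1/2) * legendreQ k t) * (\<psi> s * legendreP k s))
         = G s * (1 - real (Suc N) * (legendreP (Suc N) s * legendreQ N t - legendreP N s * legendreQ (Suc N) t)) / 2" .
      have eq2: "G s * (1 - real (Suc N) * (legendreP (Suc N) s * legendreQ N t - legendreP N s * legendreQ (Suc N) t)) / 2
         = G s / 2 - (real (Suc N) / 2) * (legendreQ N t * (G s * legendreP (Suc N) s) - legendreQ (Suc N) t * (G s * legendreP N s))"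
        by (simp add: algebra_simps diff_divide_distrib)
      show "(\<Sum>k<Suc N. ((real k + 1/2) * legendreQ k t) * (\<psi> s * legendreP k s))
         = G s / 2 - (real (Suc N) / 2) * (legendreQ N t * (G s * legendreP (Suc N) s) - legendreQ (Suc N) t * (G s * legendreP N s))"
        by (rule trans[OF eq eq2])
    qed
    also have "\<dots> = integral {-1..1} G / 2 - R N"
    proof -
      have i1: "(\<lambda>s. G s / 2) integrable_on {-1..1}" using intG by (rule integrable_on_divide)
      have i2: "(\<lambda>s. (real (Suc N) / 2) * (legendreQ N t * (G s * legendreP (Suc N) s) - legendreQ (Suc N) t * (G s * legendreP N s))) integrable_on {-1..1}"
        by (intro integrable_on_mult_right integrable_diff intGP)
      have "integral {-1..1} (\<lambda>s. G s / 2 - (real (Suc N) / 2) * (legendreQ N t * (G s * legendreP (Suc N) s) - legendreQ (Suc N) t * (G s * legendreP N s)))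
          = integral {-1..1} (\<lambda>s. G s / 2) - integral {-1..1} (\<lambda>s. (real (Suc N) / 2) * (legendreQ N t * (G s * legendreP (Suc N) s) - legendreQ (Suc N) t * (G s * legendreP N s)))"
        by (rule integral_diff[OF i1 i2])
      also have "integral {-1..1} (\<lambda>s. G s / 2) = integral {-1..1} G / 2" by (rule integral_divide)
      also have "integral {-1..1} (\<lambda>s. (real (Suc N) / 2) * (legendreQ N t * (G s * legendreP (Suc N) s) - legendreQ (Suc N) t * (G s * legendreP N s))) = R N"
        unfolding R_def GP_def
        by (simp add: integral_mult_right integral_diff integrable_on_mult_right intGP)
      finally show ?thesis .
    qed
    finally show ?thesis .
  qed
  have R0: "R \<longlonglongrightarrow> 0"
  proof (rule Lim_null_comparison)
    show "\<forall>\<^sub>F N in sequentially. norm (R N) \<le> 6 * Cq * T N" using Rb by simp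
    show "(\<lambda>N. 6 * Cq * T N) \<longlonglongrightarrow> 0" using tendsto_mult_right_zero[OF T0, of "6 * Cq"] by simp
  qed
  have "(\<lambda>N. \<Sum>k<Suc N. legendre_coeff \<psi> k * legendreQ k t) \<longlonglongrightarrow> integral {-1..1} G / 2"
    unfolding partial using tendsto_diff[OF tendsto_const R0, of "integral {-1..1} G / 2"] by simp
  then have "(\<lambda>N. \<Sum>k<N. legendre_coeff \<psi> k * legendreQ k t) \<longlonglongrightarrow> integral {-1..1} G / 2"
    by (rule filterlim_sequentially_Suc[THEN iffD1])
  then show ?thesis unfolding sums_def int_eq .
qed


lemma Fc_series:
  fixes \<psi> :: "real \<Rightarrow> real"
  assumes cont: "continuous_on {-1..1} \<psi>" and x: "x \<in> {-1..1}"
    and B: "\<And>s. s \<in> {-1..1} \<Longrightarrow> \<bar>\<psi> s\<bar> \<le> B"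
  shows "(\<lambda>m. complex_of_real (integral {-1..1} (\<lambda>s. \<psi> s * s^m)) * ((\<i> * of_real (c*x))^m / fact m))
           sums Fc c (\<lambda>t. complex_of_real (\<psi> t)) x"
proof -
  define z where "z = \<i> * complex_of_real (c*x)"
  define \<rho> where "\<rho> m = integral {-1..1} (\<lambda>s. \<psi> s * s^m)" for m
  define g where "g m s = complex_of_real (\<psi> s * s^m) * (z^m / fact m)" for m s
  have gint: "(g m has_integral (complex_of_real (\<rho> m) * (z^m / fact m))) {-1..1}" for m
  proof -
    have "((\<lambda>s. \<psi> s * s^m) has_integral \<rho> m) {-1..1}"
      unfolding \<rho>_def by (intro integrable_integral integrable_continuous_real continuous_intros cont)
    then show ?thesis unfolding g_def by (intro has_integral_mult_left has_integral_of_real)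
  qed
  have gcont: "continuous_on {-1..1} (g m)" for m
    unfolding g_def by (intro continuous_intros cont)
  have Bnn: "B \<ge> 0" using B[of 0] by auto
  have gb: "norm (g m s) \<le> B * (inverse (fact m) * \<bar>c\<bar>^m)" if s: "s \<in> {-1..1}" for m s
  proof -
    have xs: "\<bar>x\<bar> \<le> 1" "\<bar>s\<bar> \<le> 1" using x s by auto
    have "norm (g m s) = (\<bar>\<psi> s\<bar> * \<bar>s\<bar>^m) * (\<bar>c\<bar>^m * \<bar>x\<bar>^m / fact m)"
      unfolding g_def z_def by (simp add: norm_mult norm_divide norm_power abs_mult power_abs power_mult_distrib)
    also have "\<dots> \<le> (B * 1) * (\<bar>c\<bar>^m * 1 / fact m)"
      using xs B[OF s] by (intro mult_mono divide_right_mono power_le_one) (auto simp: power_le_one mult_le_one)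
    finally show ?thesis by (simp add: field_simps)
  qed
  have summ: "summable (\<lambda>m. B * (inverse (fact m) * \<bar>c\<bar>^m))"
    by (intro summable_mult summable_exp)
  have ul: "uniform_limit {-1..1} (\<lambda>n s. \<Sum>m<n. g m s) (\<lambda>s. \<Sum>m. g m s) sequentially"
    by (rule Weierstrass_m_test[OF gb summ])
  have lim_eq: "(\<Sum>m. g m s) = complex_of_real (\<psi> s) * exp (\<i> * complex_of_real (c * x * s))" for s
  proof -
    have "(\<lambda>m. (z * of_real s)^m /\<^sub>R fact m) sums exp (z * of_real s)" by (rule exp_converges)
    then have "(\<lambda>m. complex_of_real (\<psi> s) * ((z * of_real s)^m /\<^sub>R fact m)) sums (complex_of_real (\<psi> s) * exp (z * of_real s))"
      by (rule sums_mult)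
    moreover have "(\<lambda>m. complex_of_real (\<psi> s) * ((z * of_real s)^m /\<^sub>R fact m)) = (\<lambda>m. g m s)"
      unfolding g_def by (auto simp: power_mult_distrib scaleR_conv_of_real field_simps)
    moreover have "z * of_real s = \<i> * complex_of_real (c * x * s)" unfolding z_def by simp
    ultimately show ?thesis using sums_unique by metis
  qed
  obtain I J where I: "\<And>n. ((\<lambda>s. \<Sum>m<n. g m s) has_integral I n) {-1..1}"
    and J: "((\<lambda>s. \<Sum>m. g m s) has_integral J) {-1..1}" and IJ: "I \<longlonglongrightarrow> J"
    by (rule uniform_limit_integral[OF ul]) (auto intro!: continuous_intros gcont)
  have "I = (\<lambda>n. \<Sum>m<n. complex_of_real (\<rho> m) * (z^m / fact m))"
  proof
    fix n show "I n = (\<Sum>m<n. complex_of_real (\<rho> m) * (z^m / fact m))"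
      using has_integral_unique[OF I[of n] has_integral_sum[OF _ gint]] by simp
  qed
  moreover have "J = Fc c (\<lambda>t. complex_of_real (\<psi> t)) x"
    unfolding Fc_def using J lim_eq by (simp add: integral_unique)
  ultimately show ?thesis using IJ unfolding sums_def \<rho>_def z_def by metis
qed

lemma powser_zero_coeffs:
  fixes r :: "nat \<Rightarrow> real"
  assumes ser: "\<And>x. x \<in> {-1..1} \<Longrightarrow> (\<lambda>m. r m * x^m) sums 0"
  shows "r k = 0"
proof (induction k rule: less_induct)
  case (less k)
  have sh: "(\<lambda>n. r (n+k) * x^n) sums 0" if x: "x \<noteq> 0" "norm x < 1" for x :: real
  proof -
    have "(\<lambda>m. r m * x^m) sums 0" by (rule ser) (use x in auto)
    moreover have "(\<Sum>i<k. r i * x^i) = 0" using less.IH by simp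
    ultimately have "(\<lambda>n. r (n+k) * x^(n+k)) sums 0"
      using sums_iff_shift[of "\<lambda>m. r m * x^m" k 0] by simp
    then have "(\<lambda>n. r (n+k) * x^(n+k) / x^k) sums (0 / x^k)" by (rule sums_divide)
    moreover have "(\<lambda>n. r (n+k) * x^(n+k) / x^k) = (\<lambda>n. r (n+k) * x^n)"
      using x by (auto simp: power_add)
    ultimately show ?thesis by simp
  qed
  have "((\<lambda>x::real. 0) \<longlongrightarrow> r (0+k)) (at 0)"
    by (rule powser_limit_0_strong[of 1 "\<lambda>n. r (n+k)" "\<lambda>x. 0"]) (use sh in auto)
  then show "r k = 0" using LIM_const_eq by fastforce
qed

lemma pswf_series:
  fixes \<psi> :: "real \<Rightarrow> real"
  assumes c: "c > 0" and pswf: "is_pswf c n \<psi>"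
  obtains a K where "K \<ge> 0" "\<And>m. \<bar>a m\<bar> \<le> K * c^m / fact m"
    "\<And>x. x \<in> {-1..1} \<Longrightarrow> (\<lambda>m. a m * x^m) sums \<psi> x"
proof -
  from pswf obtain lam where cont: "continuous_on {-1..1} \<psi>"
    and nrm: "integral {-1..1} (\<lambda>x. (\<psi> x)\<^sup>2) = 1"
    and eig: "\<And>x. x \<in> {-1..1} \<Longrightarrow> Fc c (\<lambda>t. complex_of_real (\<psi> t)) x = lam * complex_of_real (\<psi> x)"
    unfolding is_pswf_def by blast
  obtain B where B0: "B \<ge> 0" and B: "\<And>x. x \<in> {-1..1} \<Longrightarrow> norm (\<psi> x) \<le> B"
    using continuous_on_compact_bound[OF compact_Icc cont] by blast
  have Bs: "\<And>s. s \<in> {-1..1} \<Longrightarrow> \<bar>\<psi> s\<bar> \<le> B" using B by simp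
  define \<rho> where "\<rho> m = integral {-1..1} (\<lambda>s. \<psi> s * s^m)" for m
  define d where "d m = complex_of_real (\<rho> m) * ((\<i> * complex_of_real c)^m / fact m)" for m
  have dser: "(\<lambda>m. d m * complex_of_real x ^ m) sums (lam * complex_of_real (\<psi> x))" if x: "x \<in> {-1..1}" for x
  proof -
    have "(\<lambda>m. complex_of_real (\<rho> m) * ((\<i> * of_real (c*x))^m / fact m)) sums (lam * complex_of_real (\<psi> x))"
      using Fc_series[OF cont x Bs, of c] eig[OF x] unfolding \<rho>_def by simp
    moreover have "(\<lambda>m. complex_of_real (\<rho> m) * ((\<i> * of_real (c*x))^m / fact m)) = (\<lambda>m. d m * complex_of_real x ^ m)"
      unfolding d_def by (auto simp: power_mult_distrib)
    ultimately show ?thesis by simp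
  qed
  have rho_bound: "\<bar>\<rho> m\<bar> \<le> B * 2" for m
  proof -
    have "norm (integral {-1..1} (\<lambda>s. \<psi> s * s^m)) \<le> B * (1 - (-1))"
    proof (rule integral_bound)
      show "continuous_on {-1..1} (\<lambda>s. \<psi> s * s^m)" by (intro continuous_intros cont)
      fix s :: real assume s: "s \<in> {-1..1}"
      have "\<bar>s\<bar>^m \<le> 1" using s by (intro power_le_one) auto
      then have "\<bar>\<psi> s\<bar> * \<bar>s\<bar>^m \<le> B * 1" using Bs[OF s] by (intro mult_mono) auto
      then show "norm (\<psi> s * s^m) \<le> B" by (simp add: abs_mult power_abs)
    qed simp
    then show ?thesis unfolding \<rho>_def by simp
  qed
  have lam0: "lam \<noteq> 0"
  proof
    assume lam: "lam = 0"
    have d0: "d m = 0" for m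
    proof -
      have re: "(\<lambda>m. Re (d m) * x^m) sums 0" and im: "(\<lambda>m. Im (d m) * x^m) sums 0" if x: "x \<in> {-1..1}" for x
      proof -
        have "(\<lambda>m. d m * complex_of_real (x ^ m)) sums 0" using dser[OF x] lam by simp
        then have "(\<lambda>m. Re (d m * complex_of_real (x ^ m))) sums Re 0" "(\<lambda>m. Im (d m * complex_of_real (x ^ m))) sums Im 0"
          unfolding sums_complex_iff by blast+
        then show "(\<lambda>m. Re (d m) * x^m) sums 0" "(\<lambda>m. Im (d m) * x^m) sums 0" by simp_all
      qed
      have "Re (d m) = 0" by (rule powser_zero_coeffs[of "\<lambda>m. Re (d m)"]) (rule re)
      moreover have "Im (d m) = 0" by (rule powser_zero_coeffs[of "\<lambda>m. Im (d m)"]) (rule im)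
      ultimately show ?thesis by (simp add: complex_eq_iff)
    qed
    have rho0: "\<rho> m = 0" for m
      using d0[of m] c unfolding d_def by simp
    have polyint: "integral {-1..1} (\<lambda>x. \<psi> x * p x) = 0" if p: "real_polynomial_function p" for p
    proof -
      obtain co N where pe: "p = (\<lambda>x. \<Sum>i\<le>N. co i * x^i)"
        using p real_polynomial_function_iff_sum by blast
      have "integral {-1..1} (\<lambda>x. \<psi> x * p x) = integral {-1..1} (\<lambda>x. \<Sum>i\<le>N. co i * (\<psi> x * x^i))"
        unfolding pe by (simp add: sum_distrib_left mult.left_commute)
      also have "\<dots> = (\<Sum>i\<le>N. co i * \<rho> i)" unfolding \<rho>_def
        by (subst integral_sum) (auto intro!: integrable_on_mult_right integrable_continuous_real continuous_intros cont)
      also have "\<dots> = 0" by (simp add: rho0)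
      finally show ?thesis .
    qed
    define e where "e = 1 / (2 * B + 2)"
    have e: "e > 0" unfolding e_def using B0 by simp
    obtain g where g: "polynomial_function g" and ge: "\<And>x. x \<in> {-1..1} \<Longrightarrow> norm (\<psi> x - g x) < e"
      using Stone_Weierstrass_polynomial_function[OF compact_Icc cont e] by blast
    have gc: "continuous_on {-1..1} g" by (rule continuous_on_polymonial_function[OF g])
    have gr: "real_polynomial_function g" using g real_polynomial_function_eq by blast
    have intg: "(\<lambda>x. \<psi> x * g x) integrable_on {-1..1}"
      by (intro integrable_continuous_real continuous_intros cont gc)
    have "1 = integral {-1..1} (\<lambda>x. \<psi> x * (\<psi> x - g x) + \<psi> x * g x)"
      using nrm by (simp add: power2_eq_square algebra_simps)
    also have "\<dots> = integral {-1..1} (\<lambda>x. \<psi> x * (\<psi> x - g x))"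
      by (subst integral_add) (auto intro!: intg integrable_continuous_real continuous_intros cont gc simp: polyint[OF gr])
    also have "\<dots> \<le> (B * e) * (1 - (-1))"
    proof -
      have "norm (integral {-1..1} (\<lambda>x. \<psi> x * (\<psi> x - g x))) \<le> (B * e) * (1 - (-1))"
      proof (rule integral_bound)
        show "continuous_on {-1..1} (\<lambda>x. \<psi> x * (\<psi> x - g x))"
          by (intro continuous_intros cont gc)
        fix s :: real assume s: "s \<in> {-1..1}"
        show "norm (\<psi> s * (\<psi> s - g s)) \<le> B * e"
          unfolding norm_mult using Bs[OF s] ge[OF s] B0 by (intro mult_mono) auto
      qed simp
      then show ?thesis by simp
    qed
    also have "\<dots> < 1" unfolding e_def using B0 by (simp add: field_simps)
    finally show False by simp
  qed
  define a where "a m = Re (d m / lam)" for m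
  define K where "K = B * 2 / cmod lam"
  show ?thesis
  proof
    show "K \<ge> 0" unfolding K_def using B0 by simp
    fix m
    have "\<bar>a m\<bar> \<le> cmod (d m / lam)" unfolding a_def by (rule abs_Re_le_cmod)
    also have "\<dots> = \<bar>\<rho> m\<bar> * c^m / fact m / cmod lam"
      unfolding d_def using c by (simp add: norm_mult norm_divide norm_power)
    also have "\<dots> \<le> (B * 2) * c^m / fact m / cmod lam"
      using rho_bound[of m] c by (intro divide_right_mono mult_right_mono) auto
    also have "\<dots> = K * c^m / fact m" unfolding K_def by simp
    finally show "\<bar>a m\<bar> \<le> K * c^m / fact m" .
  next
    fix x :: real assume x: "x \<in> {-1..1}"
    have "(\<lambda>m. d m * complex_of_real x ^ m / lam) sums (lam * complex_of_real (\<psi> x) / lam)"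
      by (rule sums_divide[OF dser[OF x]])
    then have "(\<lambda>m. (d m / lam) * complex_of_real (x ^ m)) sums complex_of_real (\<psi> x)"
      using lam0 by simp
    then have "(\<lambda>m. Re ((d m / lam) * complex_of_real (x ^ m))) sums Re (complex_of_real (\<psi> x))"
      unfolding sums_complex_iff by blast
    moreover have "(\<lambda>m. Re ((d m / lam) * complex_of_real (x ^ m))) = (\<lambda>m. a m * x^m)"
    proof
      fix m
      show "Re ((d m / lam) * complex_of_real (x ^ m)) = a m * x^m"
        unfolding a_def by (simp only: times_complex.sel Re_complex_of_real Im_complex_of_real)
    qed
    ultimately show "(\<lambda>m. a m * x^m) sums \<psi> x" by simp
  qed
qed


theorem theorem67:
  fixes c :: real and n :: nat and \<psi> :: "real \<Rightarrow> real" and tj :: real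
  assumes "c > 0"
    and "is_pswf c n \<psi>"
    and "tj \<in> {-1<..<1}" and "\<psi> tj = 0"
  shows "(\<lambda>k. legendre_coeff \<psi> k * legendreQ k tj) sums
           (integral {-1..1} (\<lambda>t. \<psi> t / (tj - t)) / 2)"
proof (rule pswf_series[OF assms(1) assms(2)])
  fix a :: "nat \<Rightarrow> real" and K :: real
  assume K: "K \<ge> 0" and ab: "\<And>m. \<bar>a m\<bar> \<le> K * c^m / fact m"
    and ser: "\<And>x. x \<in> {-1..1} \<Longrightarrow> (\<lambda>m. a m * x^m) sums \<psi> x"
  show ?thesis by (rule core[OF assms(1) K ab ser assms(3) assms(4)])
qed

end
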